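(* Let $\mathcal{X}=\{1,\ldots,n\}$, let $p=(p(1),\ldots,p(n))$ be a probability vector with $p(1)\geq\cdots\geq p(n)>0$ (the prior of $X$), and let $k<n$ be a positive integer. Let $j^*:=\min\{j:1\leq j\leq k,\ p(j)\leq \sum_{i=j}^n p(i)/(k-j+1)\}$ and let $\pi=(\pi_1,\ldots,\pi_k)$ with $\pi_l=p(l)$ for $l\leq j^*-1$ and $\pi_l=\sum_{i=j^*}^n p(i)/(k-j^*+1)$ for $j^*\leq l\leq k$. Then for every generalised entropy $(\eta,F)$ and every feasible channel, $H(X\mid Y)\leq H(\pi)=\eta(F(\pi))$.
   Context: Generalised entropy: a pair $(\eta,F)$ where $F$ is a bounded real-valued function on probability vectors of every finite length that is symmetric (unchanged by permuting entries) and expansible (unchanged by appending zero entries), and $\eta$ is a real function, such that either $\eta$ is increasing and $F$ concave, or $\eta$ is decreasing and $F$ convex. $H(X\mid Y)=\eta\big(\sum_{y:\,p(y)>0}p(y)F(p_{X\mid y})\big)$ with $p_{X\mid y}=(p(x\mid y))_{x\in\mathcal{X}}$. A channel is a discrete output set $\mathcal{Y}$ with conditional probabilities $p(y\mid x)\geq0$, $\sum_y p(y\mid x)=1$; $Y$ is its output when the input is $X\sim p$, with $p(y)=\sum_x p(x)p(y\mid x)$ and $p(x\mid y)=p(x)p(y\mid x)/p(y)$. The pre-image of $y$ is $\{x:p(y\mid x)>0\}$; the channel is feasible if every pre-image has at most $k$ elements. *)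

theory Defs
  imports "HOL-Analysis.Analysis" "HOL-Library.Multiset"
begin

definition prob_vec :: "real list \<Rightarrow> bool" where
  "prob_vec xs \<longleftrightarrow> (\<forall>x\<in>set xs. 0 \<le> x) \<and> sum_list xs = 1"

definition concave_ent :: "(real list \<Rightarrow> real) \<Rightarrow> bool" where
  "concave_ent F \<longleftrightarrow> (\<forall>xs ys t. prob_vec xs \<longrightarrow> prob_vec ys \<longrightarrow> length xs = length ys
     \<longrightarrow> 0 \<le> t \<longrightarrow> t \<le> 1
     \<longrightarrow> t * F xs + (1 - t) * F ys \<le> F (map2 (\<lambda>a b. t * a + (1 - t) * b) xs ys))"

definition convex_ent :: "(real list \<Rightarrow> real) \<Rightarrow> bool" where
  "convex_ent F \<longleftrightarrow> (\<forall>xs ys t. prob_vec xs \<longrightarrow> prob_vec ys \<longrightarrow> length xs = length ys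
     \<longrightarrow> 0 \<le> t \<longrightarrow> t \<le> 1
     \<longrightarrow> F (map2 (\<lambda>a b. t * a + (1 - t) * b) xs ys) \<le> t * F xs + (1 - t) * F ys)"

definition gen_entropy :: "(real \<Rightarrow> real) \<Rightarrow> (real list \<Rightarrow> real) \<Rightarrow> bool" where
  "gen_entropy \<eta> F \<longleftrightarrow>
     (\<exists>B. \<forall>xs. prob_vec xs \<longrightarrow> \<bar>F xs\<bar> \<le> B) \<and>
     (\<forall>xs ys. prob_vec xs \<longrightarrow> mset xs = mset ys \<longrightarrow> F ys = F xs) \<and>
     (\<forall>xs. prob_vec xs \<longrightarrow> F (xs @ [0]) = F xs) \<and>
     ((mono \<eta> \<and> concave_ent F) \<or> (antimono \<eta> \<and> convex_ent F))"

text \<open>A channel with input set {1..n}: W x y = p(y|x).\<close>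
definition channel :: "nat \<Rightarrow> (nat \<Rightarrow> 'y \<Rightarrow> real) \<Rightarrow> bool" where
  "channel n W \<longleftrightarrow> (\<forall>x\<in>{1..n}. (\<forall>y. 0 \<le> W x y) \<and> ((\<lambda>y. W x y) has_sum 1) UNIV)"

definition feasible :: "nat \<Rightarrow> nat \<Rightarrow> (nat \<Rightarrow> 'y \<Rightarrow> real) \<Rightarrow> bool" where
  "feasible n k W \<longleftrightarrow> (\<forall>y. card {x\<in>{1..n}. 0 < W x y} \<le> k)"

definition out_prob :: "nat \<Rightarrow> (nat \<Rightarrow> real) \<Rightarrow> (nat \<Rightarrow> 'y \<Rightarrow> real) \<Rightarrow> 'y \<Rightarrow> real" where
  "out_prob n p W y = (\<Sum>x=1..n. p x * W x y)"

definition post :: "nat \<Rightarrow> (nat \<Rightarrow> real) \<Rightarrow> (nat \<Rightarrow> 'y \<Rightarrow> real) \<Rightarrow> 'y \<Rightarrow> real list" where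
  "post n p W y = map (\<lambda>x. p x * W x y / out_prob n p W y) [1..<n+1]"

definition cond_ent :: "(real \<Rightarrow> real) \<Rightarrow> (real list \<Rightarrow> real) \<Rightarrow> nat \<Rightarrow> (nat \<Rightarrow> real)
    \<Rightarrow> (nat \<Rightarrow> 'y \<Rightarrow> real) \<Rightarrow> real" where
  "cond_ent \<eta> F n p W =
     \<eta> (\<Sum>\<^sub>\<infinity>y\<in>{y. 0 < out_prob n p W y}. out_prob n p W y * F (post n p W y))"

definition jstar :: "nat \<Rightarrow> (nat \<Rightarrow> real) \<Rightarrow> nat \<Rightarrow> nat" where
  "jstar n p k = (LEAST j. 1 \<le> j \<and> j \<le> k \<and>
      p j \<le> (\<Sum>i=j..n. p i) / real (k - j + 1))"

definition pi_vec :: "nat \<Rightarrow> (nat \<Rightarrow> real) \<Rightarrow> nat \<Rightarrow> real list" where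
  "pi_vec n p k = map (\<lambda>l. if l \<le> jstar n p k - 1 then p l
      else (\<Sum>i=jstar n p k..n. p i) / real (k - jstar n p k + 1)) [1..<k+1]"

end

theory Submission
  imports Defs
begin
lemma insort_prefix:
  fixes x :: real
  shows "x + sum_list (take l xs) \<le> sum_list (take (Suc l) (insort_key uminus x xs))"
proof (induction xs arbitrary: l)
  case Nil then show ?case by simp
next
  case (Cons y ys)
  show ?case
  proof (cases "x \<ge> y")
    case True then show ?thesis by simp
  next
    case False
    show ?thesis
    proof (cases l)
      case 0 then show ?thesis using False by simp
    next
      case (Suc l')
      then show ?thesis using False Cons[of l'] by simp
    qed
  qed
qed

lemma sort_prefix:
  fixes xs :: "real list"
  shows "sum_list (take l xs) \<le> sum_list (take l (sort_key uminus xs))"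
proof (induction xs arbitrary: l)
  case Nil then show ?case by simp
next
  case (Cons x xs)
  show ?case
  proof (cases l)
    case 0 then show ?thesis by simp
  next
    case (Suc l')
    have "sum_list (take l (x # xs)) = x + sum_list (take l' xs)" using Suc by simp
    also have "\<dots> \<le> x + sum_list (take l' (sort_key uminus xs))" using Cons by simp
    also have "\<dots> \<le> sum_list (take l (sort_key uminus (x#xs)))"
      using Suc insort_prefix by simp
    finally show ?thesis .
  qed
qed

lemma sort_desc:
  fixes xs :: "real list"
  assumes "i \<le> j" "j < length xs"
  shows "sort_key uminus xs ! j \<le> sort_key uminus xs ! i"
proof -
  have "sorted (map uminus (sort_key uminus xs))" by (rule sorted_sort_key)
  then have "map uminus (sort_key uminus xs) ! i \<le> map uminus (sort_key uminus xs) ! j"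
    using assms by (intro sorted_nth_mono) auto
  then show ?thesis using assms by simp
qed

lemma prefix_map:
  assumes "l \<le> N"
  shows "sum_list (take l (map (v::nat\<Rightarrow>real) [0..<N])) = (\<Sum>i<l. v i)"
proof -
  have "take l (map v [0..<N]) = map v [0..<l]" using assms by (simp add: take_map)
  then show ?thesis by (simp add: sum_list_sum_nth atLeast0LessThan)
qed

lemma prob_vec_map:
  "prob_vec (map (v::nat\<Rightarrow>real) [0..<N]) \<longleftrightarrow> (\<forall>i<N. 0 \<le> v i) \<and> (\<Sum>i<N. v i) = 1"
  by (auto simp: prob_vec_def sum_list_sum_nth atLeast0LessThan)

lemma mset_swap:
  assumes "a < N" "b < N"
  shows "mset (map (v \<circ> Transposition.transpose a b) [0..<N]) = mset (map v [0..<N])"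
proof -
  have "mset (map (Transposition.transpose a b) [0..<N]) = mset [0..<N]"
  proof -
    have "mset (map (Transposition.transpose a b) [0..<N]) = image_mset (Transposition.transpose a b) (mset_set {0..<N})"
      by (simp add: mset_upt)
    also have "\<dots> = mset_set (Transposition.transpose a b ` {0..<N})"
      by (rule image_mset_mset_set) simp
    also have "Transposition.transpose a b ` {0..<N} = {0..<N}"
      using assms by (auto simp: Transposition.transpose_def image_iff split: if_splits)
    finally show ?thesis by (simp add: mset_upt)
  qed
  then have "image_mset v (mset (map (Transposition.transpose a b) [0..<N])) = image_mset v (mset [0..<N])"
    by simp
  then show ?thesis by (simp add: image_mset.compositionality[symmetric] map_map[symmetric] del: map_map)
qed

lemma schur_aux:
  fixes F :: "real list \<Rightarrow> real" and x :: "nat \<Rightarrow> real"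
  assumes conc: "concave_ent F"
    and sym: "\<forall>xs ys. prob_vec xs \<longrightarrow> mset xs = mset ys \<longrightarrow> F ys = F xs"
    and xdec: "\<And>i j. i \<le> j \<Longrightarrow> j < N \<Longrightarrow> x j \<le> x i"
    and xnn: "\<And>i. i < N \<Longrightarrow> 0 \<le> x i"
    and xtot: "(\<Sum>i<N. x i) = 1"
  shows "\<And>y. card {l. l < N \<and> (\<Sum>i<l. x i) < (\<Sum>i<l. y i)} = m \<Longrightarrow>
     (\<forall>i<N. 0 \<le> y i) \<Longrightarrow> (\<Sum>i<N. y i) = 1 \<Longrightarrow>
     (\<forall>l\<le>N. (\<Sum>i<l. x i) \<le> (\<Sum>i<l. y i)) \<Longrightarrow>
     F (map y [0..<N]) \<le> F (map x [0..<N])"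
proof (induction m rule: less_induct)
  case (less m y)
  define S where "S = (\<lambda>v::nat\<Rightarrow>real. \<lambda>l. \<Sum>i<l. v i)"
  define D where "D = {l. l < N \<and> S x l < S y l}"
  have dom: "\<And>l. l \<le> N \<Longrightarrow> S x l \<le> S y l" using less.prems(4) by (simp add: S_def)
  have totN: "S x N = S y N" using less.prems(3) xtot by (simp add: S_def)
  have finD: "finite D" unfolding D_def by simp
  show ?case
  proof (cases "D = {}")
    case True
    have eqS: "S x l = S y l" if "l \<le> N" for l
    proof (cases "l = N")
      case True then show ?thesis using totN by simp
    next
      case False
      then have "l \<notin> D" "l < N" using \<open>D = {}\<close> that by auto
      then show ?thesis using dom[of l] that unfolding D_def by auto
    qed
    have "y i = x i" if "i < N" for i
    proof -
      have "S x (Suc i) = S y (Suc i)" "S x i = S y i" using eqS that by auto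
      then show ?thesis by (simp add: S_def)
    qed
    then have "map y [0..<N] = map x [0..<N]" by (intro map_cong) auto
    then show ?thesis by (metis order_refl)
  next
    case False
    define a' where "a' = Min D"
    have a'D: "a' \<in> D" using False finD a'_def by simp
    have a'min: "\<And>l. l \<in> D \<Longrightarrow> a' \<le> l" using finD a'_def by simp
    have a'N: "a' < N" using a'D D_def by simp
    have "a' \<noteq> 0" proof assume "a' = 0" then show False using a'D by (simp add: D_def S_def) qed
    define a where "a = a' - 1"
    have a'a: "a' = Suc a" using \<open>a' \<noteq> 0\<close> a_def by simp
    have "a \<notin> D" using a'min[of a] a'a by auto
    then have Sa: "S x a = S y a" using dom[of a] a'N a'a unfolding D_def by auto
    have gapa: "S y a' - S x a' = y a - x a" using Sa a'a by (simp add: S_def)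
    have ya: "x a < y a" using gapa a'D D_def by simp
    define b' where "b' = (LEAST l. a' < l \<and> l \<le> N \<and> S x l = S y l)"
    have exb: "a' < N \<and> N \<le> N \<and> S x N = S y N" using a'N totN by simp
    have b'prop: "a' < b' \<and> b' \<le> N \<and> S x b' = S y b'"
      unfolding b'_def by (rule LeastI[of _ N]) (rule exb)
    have b'min: "\<And>l. a' < l \<Longrightarrow> l \<le> N \<Longrightarrow> S x l = S y l \<Longrightarrow> b' \<le> l"
      unfolding b'_def by (rule Least_le) simp
    have inD: "l \<in> D" if "a' \<le> l" "l < b'" for l
    proof (cases "l = a'")
      case True then show ?thesis using a'D by simp
    next
      case False
      then have "S x l \<noteq> S y l" using b'min[of l] that b'prop by force
      then show ?thesis using dom[of l] that b'prop unfolding D_def by auto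
    qed
    define b where "b = b' - 1"
    have b'b: "b' = Suc b" using b'prop b_def by simp
    have "b \<in> D" using inD[of b] b'b b'prop by simp
    then have "S x b < S y b" using D_def by simp
    then have yb: "y b < x b" using b'prop b'b by (simp add: S_def)
    have ab: "a < b" using b'prop a'a b'b by simp
    have bN: "b < N" using b'prop b'b by simp
    have xab: "x b \<le> x a" using xdec ab bN by simp
    define G where "G = (\<lambda>l. S y l - S x l) ` {a'..<b'}"
    have finG: "finite G" "G \<noteq> {}" using b'prop by (auto simp: G_def)
    define \<delta> where "\<delta> = Min G"
    have \<delta>le: "\<And>l. a' \<le> l \<Longrightarrow> l < b' \<Longrightarrow> \<delta> \<le> S y l - S x l"
      unfolding \<delta>_def G_def using finG by (intro Min_le) (auto simp: G_def)
    obtain l0 where l0: "a' \<le> l0" "l0 < b'" "\<delta> = S y l0 - S x l0"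
      using Min_in[OF finG] unfolding \<delta>_def G_def by auto
    have \<delta>pos: "0 < \<delta>" using inD[OF l0(1,2)] l0(3) D_def by simp
    have \<delta>a: "\<delta> \<le> y a - x a" using \<delta>le[of a'] b'prop gapa by simp
    define y' where "y' = y(a := y a - \<delta>, b := y b + \<delta>)"
    have y'i: "y' i = y i - (if i = a then \<delta> else 0) + (if i = b then \<delta> else 0)" for i
      using ab by (auto simp: y'_def)
    have Sy': "S y' l = S y l - (if a < l then \<delta> else 0) + (if b < l then \<delta> else 0)" for l
      by (simp add: S_def y'i sum.distrib sum_subtractf)
    have Sy'2: "S y' l = (if a < l \<and> l \<le> b then S y l - \<delta> else S y l)" for l
      using Sy'[of l] ab by auto
    have dom': "\<forall>l\<le>N. S x l \<le> S y' l"
    proof (intro allI impI)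
      fix l assume "l \<le> N"
      show "S x l \<le> S y' l"
      proof (cases "a < l \<and> l \<le> b")
        case True
        then have "\<delta> \<le> S y l - S x l" using \<delta>le[of l] a'a b'b by simp
        then show ?thesis using Sy'2[of l] True by simp
      next
        case False then have "S y' l = S y l" using Sy'2[of l] by presburger then show ?thesis using dom[OF \<open>l \<le> N\<close>] by simp
      qed
    qed
    have nn': "\<forall>i<N. 0 \<le> y' i"
      using less.prems(2) \<delta>a xnn[of a] \<delta>pos ab bN by (auto simp: y'_def)
    have tot': "(\<Sum>i<N. y' i) = 1"
      using Sy'2[of N] bN less.prems(3) by (simp add: S_def)
    define D' where "D' = {l. l < N \<and> S x l < S y' l}"
    have "D' \<subseteq> D" using Sy'2 \<delta>pos unfolding D'_def D_def by (auto split: if_splits)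
    moreover have "l0 \<in> D" "l0 \<notin> D'" using inD[OF l0(1,2)] Sy'2[of l0] l0 a'a b'b
      unfolding D'_def by auto
    ultimately have "D' \<subset> D" by auto
    moreover have "card D = m" using less.prems(1) unfolding D_def S_def by simp
    ultimately have cardlt: "card D' < m" using finD psubset_card_mono by blast
    have IH: "F (map y' [0..<N]) \<le> F (map x [0..<N])"
      using less.IH[OF cardlt, of y'] nn' tot' dom' unfolding D'_def S_def by simp
    define ys where "ys = y \<circ> Transposition.transpose a b"
    have pv: "prob_vec (map y [0..<N])" using less.prems(2,3) by (simp add: prob_vec_map)
    have msym: "mset (map y [0..<N]) = mset (map ys [0..<N])"
      unfolding ys_def using mset_swap[OF _ bN, of a y] ab bN by (simp only:)
    have Fys: "F (map ys [0..<N]) = F (map y [0..<N])" using sym pv msym by blast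
    have pvs: "prob_vec (map ys [0..<N])" using pv msym unfolding prob_vec_def
      by (metis mset_eq_setD sum_mset_sum_list)
    define t where "t = 1 - \<delta> / (y a - y b)"
    have yab: "y b < y a" using ya yb xab by simp
    have t01: "0 \<le> t" "t \<le> 1" using \<delta>a \<delta>pos yab xab yb by (auto simp: t_def field_simps)
    have comb: "map2 (\<lambda>u v. t * u + (1 - t) * v) (map y [0..<N]) (map ys [0..<N]) = map y' [0..<N]"
    proof (rule nth_equalityI)
      show "length (map2 (\<lambda>u v. t * u + (1 - t) * v) (map y [0..<N]) (map ys [0..<N])) =
        length (map y' [0..<N])" by simp
    next
      fix i assume "i < length (map2 (\<lambda>u v. t * u + (1 - t) * v) (map y [0..<N]) (map ys [0..<N]))"
      then have iN: "i < N" by simp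
      have "t * y i + (1 - t) * ys i = y' i"
      proof -
        have ne: "y a - y b \<noteq> 0" using yab by simp
        have h: "(1 - t) * (y a - y b) = \<delta>" using ne by (simp add: t_def)
        have ca: "t * y a + (1 - t) * y b = y a - \<delta>" by (simp add: h[symmetric] algebra_simps)
        have cb: "t * y b + (1 - t) * y a = y b + \<delta>" by (simp add: h[symmetric] algebra_simps)
        have cc: "t * y i + (1 - t) * y i = y i" by (simp add: algebra_simps)
        show ?thesis
          using ab ca cb cc by (auto simp: ys_def y'_def Transposition.transpose_def)
      qed
      then show "map2 (\<lambda>u v. t * u + (1 - t) * v) (map y [0..<N]) (map ys [0..<N]) ! i = map y' [0..<N] ! i"
        using iN by simp
    qed
    have "t * F (map y [0..<N]) + (1 - t) * F (map ys [0..<N]) \<le> F (map y' [0..<N])"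
      using conc pv pvs t01 comb unfolding concave_ent_def by (metis length_map)
    then have "F (map y [0..<N]) \<le> F (map y' [0..<N])" using Fys by (simp add: algebra_simps)
    then show ?thesis using IH by simp
  qed
qed

lemma map2_map_upt: "map2 g (map u [0..<N]) (map v [0..<N]) = map (\<lambda>j. g (u j) (v j)) [0..<N]"
  by (rule nth_equalityI) auto

lemma jensen_fin:
  fixes F :: "real list \<Rightarrow> real" and v :: "'i \<Rightarrow> nat \<Rightarrow> real"
  assumes conc: "concave_ent F" and fin: "finite I"
  shows "\<And>w. (\<forall>i\<in>I. 0 \<le> w i) \<Longrightarrow> sum w I = 1 \<Longrightarrow> (\<forall>i\<in>I. prob_vec (map (v i) [0..<N])) \<Longrightarrow>
    (\<Sum>i\<in>I. w i * F (map (v i) [0..<N])) \<le> F (map (\<lambda>j. \<Sum>i\<in>I. w i * v i j) [0..<N])"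
  using fin
proof (induction I rule: finite_induct)
  case empty then show ?case by simp
next
  case (insert a I w)
  define s where "s = sum w I"
  have s0: "0 \<le> s" using insert.prems(1) s_def by (simp add: sum_nonneg)
  have wa: "w a = 1 - s" using insert.prems(2) insert.hyps s_def by simp
  show ?case
  proof (cases "s = 0")
    case True
    then have wz: "\<forall>i\<in>I. w i = 0" using insert.prems(1) insert.hyps s_def
      by (simp add: sum_nonneg_eq_0_iff)
    then have l: "(\<Sum>i\<in>insert a I. w i * F (map (v i) [0..<N])) = F (map (v a) [0..<N])"
      using insert.hyps wa True by simp
    have "(\<lambda>j. \<Sum>i\<in>insert a I. w i * v i j) = v a"
      using insert.hyps wa True wz by (simp add: fun_eq_iff)
    then show ?thesis using l by simp
  next
    case False
    then have spos: "0 < s" using s0 by simp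
    define w' where "w' i = w i / s" for i
    have w'nn: "\<forall>i\<in>I. 0 \<le> w' i" using insert.prems(1) spos by (simp add: w'_def)
    have w'sum: "sum w' I = 1" using spos by (simp add: w'_def s_def[symmetric] sum_divide_distrib[symmetric])
    define m where "m = (\<lambda>j. \<Sum>i\<in>I. w' i * v i j)"
    have IH: "(\<Sum>i\<in>I. w' i * F (map (v i) [0..<N])) \<le> F (map m [0..<N])"
      using insert.IH[OF w'nn w'sum] insert.prems(3) by (simp add: m_def)
    have pvi: "\<forall>i\<in>insert a I. (\<forall>j<N. 0 \<le> v i j) \<and> (\<Sum>j<N. v i j) = 1"
      using insert.prems(3) by (simp add: prob_vec_map)
    have pvm: "prob_vec (map m [0..<N])"
    proof -
      have "\<forall>j<N. 0 \<le> m j" using pvi w'nn by (auto simp: m_def intro!: sum_nonneg)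
      moreover have "(\<Sum>j<N. m j) = 1"
      proof -
        have "(\<Sum>j<N. m j) = (\<Sum>i\<in>I. w' i * (\<Sum>j<N. v i j))"
          by (simp add: m_def sum.swap[of _ "{..<N}"] sum_distrib_left)
        also have "\<dots> = (\<Sum>i\<in>I. w' i)" using pvi by simp
        finally show ?thesis using w'sum by simp
      qed
      ultimately show ?thesis by (simp add: prob_vec_map)
    qed
    have pva: "prob_vec (map (v a) [0..<N])" using insert.prems(3) by simp
    have t01: "0 \<le> w a" "w a \<le> 1" using insert.prems(1) wa s0 by auto
    have cc: "w a * F (map (v a) [0..<N]) + (1 - w a) * F (map m [0..<N])
        \<le> F (map2 (\<lambda>x y. w a * x + (1 - w a) * y) (map (v a) [0..<N]) (map m [0..<N]))"
      using conc pva pvm t01 unfolding concave_ent_def by simp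
    have comb: "map2 (\<lambda>x y. w a * x + (1 - w a) * y) (map (v a) [0..<N]) (map m [0..<N])
        = map (\<lambda>j. \<Sum>i\<in>insert a I. w i * v i j) [0..<N]"
    proof -
      have "w a * v a j + (1 - w a) * m j = (\<Sum>i\<in>insert a I. w i * v i j)" for j
      proof -
        have "(1 - w a) * m j = (\<Sum>i\<in>I. w i * v i j)"
          using spos wa by (simp add: m_def w'_def sum_distrib_left)
        then show ?thesis using insert.hyps by simp
      qed
      then show ?thesis by (simp add: map2_map_upt)
    qed
    have "(\<Sum>i\<in>insert a I. w i * F (map (v i) [0..<N]))
        = w a * F (map (v a) [0..<N]) + s * (\<Sum>i\<in>I. w' i * F (map (v i) [0..<N]))"
      using insert.hyps spos by (simp add: w'_def sum_distrib_left)
    also have "\<dots> \<le> w a * F (map (v a) [0..<N]) + (1 - w a) * F (map m [0..<N])"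
      using IH spos wa by (simp add: mult_left_mono)
    also have "\<dots> \<le> F (map (\<lambda>j. \<Sum>i\<in>insert a I. w i * v i j) [0..<N])"
      using cc comb by simp
    finally show ?thesis .
  qed
qed

lemma infsum_sum_fin:
  fixes f :: "'j \<Rightarrow> 'y \<Rightarrow> real"
  assumes "finite J" "\<And>j. j \<in> J \<Longrightarrow> f j summable_on Y"
  shows "infsum (\<lambda>y. \<Sum>j\<in>J. f j y) Y = (\<Sum>j\<in>J. infsum (f j) Y)
    \<and> (\<lambda>y. \<Sum>j\<in>J. f j y) summable_on Y"
  using assms
proof (induction J rule: finite_induct)
  case empty then show ?case by simp
next
  case (insert a J)
  then have IH: "infsum (\<lambda>y. \<Sum>j\<in>J. f j y) Y = (\<Sum>j\<in>J. infsum (f j) Y)"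
      "(\<lambda>y. \<Sum>j\<in>J. f j y) summable_on Y" by auto
  have fa: "f a summable_on Y" using insert.prems by simp
  show ?case using insert.hyps IH fa
    by (simp add: infsum_add summable_on_add)
qed

lemma jensen_inf:
  fixes F :: "real list \<Rightarrow> real" and w :: "'y \<Rightarrow> real" and v :: "'y \<Rightarrow> nat \<Rightarrow> real"
  assumes conc: "concave_ent F"
    and bnd: "\<And>xs. prob_vec xs \<Longrightarrow> \<bar>F xs\<bar> \<le> B"
    and wnn: "\<And>y. y \<in> Y \<Longrightarrow> 0 \<le> w y"
    and ws: "(w has_sum 1) Y"
    and pv: "\<And>y. y \<in> Y \<Longrightarrow> prob_vec (map (v y) [0..<N])"
  shows "(\<forall>j<N. (\<lambda>y. w y * v y j) summable_on Y) \<and> (\<lambda>y. w y * F (map (v y) [0..<N])) summable_on Y \<and>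
    infsum (\<lambda>y. w y * F (map (v y) [0..<N])) Y
      \<le> F (map (\<lambda>j. infsum (\<lambda>y. w y * v y j) Y) [0..<N])"
proof -
  define g where "g = (\<lambda>y. w y * F (map (v y) [0..<N]))"
  define r where "r = (\<lambda>j. infsum (\<lambda>y. w y * v y j) Y)"
  have pvi: "\<And>y. y \<in> Y \<Longrightarrow> (\<forall>j<N. 0 \<le> v y j) \<and> (\<Sum>j<N. v y j) = 1"
    using pv by (simp add: prob_vec_map)
  have vle1: "v y j \<le> 1" if "y \<in> Y" "j < N" for y j
  proof -
    have "v y j \<le> (\<Sum>j<N. v y j)" using pvi[OF that(1)] that(2)
      by (intro member_le_sum) auto
    then show ?thesis using pvi[OF that(1)] by simp
  qed
  have wsum: "w summable_on Y" using ws by (simp add: has_sum_iff)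
  have winf: "infsum w Y = 1" using ws by (simp add: has_sum_iff)
  have wvs: "(\<lambda>y. w y * v y j) summable_on Y" if "j < N" for j
  proof (rule summable_on_comparison_test[OF wsum])
    fix y assume y: "y \<in> Y"
    show "w y * v y j \<le> w y" using wnn[OF y] vle1[OF y that] by (simp add: mult_left_le)
    show "0 \<le> w y * v y j" using wnn[OF y] pvi[OF y] that by simp
  qed
  have B0: "0 \<le> B" using bnd[of "[1]"] by (simp add: prob_vec_def)
  have gs: "g summable_on Y"
  proof -
    have "(\<lambda>y. B * w y) summable_on Y" using wsum by (rule summable_on_cmult_right)
    then have "(\<lambda>y. norm (g y)) summable_on Y"
    proof (rule summable_on_comparison_test)
      fix y assume y: "y \<in> Y"
      show "norm (g y) \<le> B * w y"
        using wnn[OF y] bnd[OF pv[OF y]] by (simp add: g_def abs_mult mult.commute[of B] mult_left_mono)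
      show "0 \<le> norm (g y)" by simp
    qed
    then show ?thesis by (rule abs_summable_summable)
  qed
  have key: "sum g A \<le> F (map r [0..<N]) + (1 - sum w A) * B" if A: "finite A" "A \<subseteq> Y" for A
  proof -
    define T where "T = sum w A"
    define tl where "tl = (\<lambda>j. infsum (\<lambda>y. w y * v y j) (Y - A))"
    have wsumD: "w summable_on (Y - A)" using wsum summable_on_subset_banach[of w Y "Y - A"] by blast
    have splitw: "infsum w Y = T + infsum w (Y - A)"
    proof -
      have "infsum w Y = infsum w (A \<union> (Y - A))" using A by (simp add: Un_absorb1)
      also have "\<dots> = infsum w A + infsum w (Y - A)"
        using A wsumD by (intro infsum_Un_disjoint) auto
      finally show ?thesis using A by (simp add: T_def)
    qed
    have tlnn: "0 \<le> tl j" if "j < N" for j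
      unfolding tl_def using wnn pvi that by (intro infsum_nonneg) auto
    have rsplit: "r j = (\<Sum>y\<in>A. w y * v y j) + tl j" if "j < N" for j
    proof -
      have s2: "(\<lambda>y. w y * v y j) summable_on (Y - A)"
        using wvs[OF that] summable_on_subset_banach[of _ Y "Y - A"] by blast
      have "r j = infsum (\<lambda>y. w y * v y j) (A \<union> (Y - A))" using A by (simp add: r_def Un_absorb1)
      also have "\<dots> = infsum (\<lambda>y. w y * v y j) A + tl j"
        unfolding tl_def using A s2 by (intro infsum_Un_disjoint) auto
      finally show ?thesis using A by simp
    qed
    have tlsum: "(\<Sum>j<N. tl j) = 1 - T"
    proof -
      have "(\<Sum>j<N. tl j) = infsum (\<lambda>y. \<Sum>j<N. w y * v y j) (Y - A)"
      proof -
        have "\<And>j. j \<in> {..<N} \<Longrightarrow> (\<lambda>y. w y * v y j) summable_on (Y - A)"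
          using wvs summable_on_subset_banach[of _ Y "Y - A"] by blast
        then show ?thesis unfolding tl_def
          using infsum_sum_fin[of "{..<N}" "\<lambda>j y. w y * v y j" "Y - A"] by simp
      qed
      also have "\<dots> = infsum w (Y - A)"
        by (intro infsum_cong) (use pvi in \<open>auto simp: sum_distrib_left[symmetric]\<close>)
      finally show ?thesis using splitw winf by simp
    qed
    have "0 \<le> (\<Sum>j<N. tl j)" using tlnn by (intro sum_nonneg) simp
    then have T1: "T \<le> 1" using tlsum by simp
    have rnn: "\<forall>j<N. 0 \<le> r j" using wnn pvi by (auto simp: r_def intro!: infsum_nonneg)
    have rsum: "(\<Sum>j<N. r j) = 1"
    proof -
      have "(\<Sum>j<N. r j) = infsum (\<lambda>y. \<Sum>j<N. w y * v y j) Y"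
        unfolding r_def using infsum_sum_fin[of "{..<N}" "\<lambda>j y. w y * v y j" Y] wvs by simp
      also have "\<dots> = infsum w Y"
        by (intro infsum_cong) (use pvi in \<open>auto simp: sum_distrib_left[symmetric]\<close>)
      finally show ?thesis using winf by simp
    qed
    define t where "t = (if T < 1 then (\<lambda>j. tl j / (1 - T)) else r)"
    have pvt: "prob_vec (map t [0..<N])"
    proof (cases "T < 1")
      case True
      then have "(\<Sum>j<N. tl j / (1 - T)) = 1" using tlsum by (simp add: sum_divide_distrib[symmetric])
      then show ?thesis using True tlnn by (simp add: prob_vec_map t_def)
    next
      case False then show ?thesis using rnn rsum by (simp add: prob_vec_map t_def)
    qed
    have rdec: "r j = (\<Sum>y\<in>A. w y * v y j) + (1 - T) * t j" if "j < N" for j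
    proof (cases "T < 1")
      case True then show ?thesis using rsplit[OF that] by (simp add: t_def)
    next
      case False
      then have "T = 1" using T1 by simp
      then have "(\<Sum>j<N. tl j) = 0" using tlsum by simp
      then have "tl j = 0" using sum_nonneg_eq_0_iff[of "{..<N}" tl] tlnn that by auto
      then show ?thesis using rsplit[OF that] \<open>T = 1\<close> by simp
    qed
    define I where "I = insert None (Some ` A)"
    define W where "W = (\<lambda>i. case i of None \<Rightarrow> 1 - T | Some y \<Rightarrow> w y)"
    define V where "V = (\<lambda>i. case i of None \<Rightarrow> t | Some y \<Rightarrow> v y)"
    have sumI: "(\<Sum>i\<in>I. f i) = f None + (\<Sum>y\<in>A. f (Some y))" for f :: "'y option \<Rightarrow> real"
      unfolding I_def using A by (simp add: sum.reindex)
    have J: "(\<Sum>i\<in>I. W i * F (map (V i) [0..<N])) \<le> F (map (\<lambda>j. \<Sum>i\<in>I. W i * V i j) [0..<N])"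
    proof (rule jensen_fin[OF conc])
      show "finite I" using A by (simp add: I_def)
      show "\<forall>i\<in>I. 0 \<le> W i" using T1 wnn A by (auto simp: I_def W_def)
      show "sum W I = 1" using sumI[of W] by (simp add: W_def T_def)
      show "\<forall>i\<in>I. prob_vec (map (V i) [0..<N])" using pvt pv A by (auto simp: I_def V_def)
    qed
    have m1: "map (\<lambda>j. \<Sum>i\<in>I. W i * V i j) [0..<N] = map r [0..<N]"
      using rdec by (intro map_cong) (auto simp: sumI W_def V_def)
    have m2: "(\<Sum>i\<in>I. W i * F (map (V i) [0..<N])) = (1 - T) * F (map t [0..<N]) + sum g A"
      by (simp add: sumI W_def V_def g_def)
    have "(1 - T) * F (map t [0..<N]) + sum g A \<le> F (map r [0..<N])" using J unfolding m1 m2 .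
    moreover have "- B \<le> F (map t [0..<N])" using bnd[OF pvt] by simp
    then have "(1 - T) * (- B) \<le> (1 - T) * F (map t [0..<N])" using T1 by (intro mult_left_mono) auto
    ultimately show ?thesis by (simp add: T_def algebra_simps)
  qed
  have lim1: "(sum g \<longlongrightarrow> infsum g Y) (finite_subsets_at_top Y)"
    using gs has_sum_def has_sum_infsum by blast
  have lim2: "((\<lambda>A. F (map r [0..<N]) + (1 - sum w A) * B) \<longlongrightarrow> F (map r [0..<N]) + (1 - 1) * B)
      (finite_subsets_at_top Y)"
    using ws unfolding has_sum_def by (intro tendsto_intros)
  have "infsum g Y \<le> F (map r [0..<N]) + (1 - 1) * B"
  proof (rule tendsto_le[OF finite_subsets_at_top_neq_bot lim2 lim1])
    show "\<forall>\<^sub>F A in finite_subsets_at_top Y. sum g A \<le> F (map r [0..<N]) + (1 - sum w A) * B"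
      by (rule eventually_finite_subsets_at_top_weakI) (rule key)
  qed
  then show ?thesis using gs wvs by (simp add: g_def r_def)
qed

lemma has_sum_sum_fin:
  fixes f :: "'j \<Rightarrow> 'y \<Rightarrow> real"
  assumes "finite J" "\<And>j. j \<in> J \<Longrightarrow> (f j has_sum s j) Y"
  shows "((\<lambda>y. \<Sum>j\<in>J. f j y) has_sum (\<Sum>j\<in>J. s j)) Y"
  using assms
proof (induction J rule: finite_induct)
  case empty then show ?case by simp
next
  case (insert a J)
  then show ?case by (simp add: has_sum_add)
qed

lemma avg_dec:
  fixes a :: "nat \<Rightarrow> real"
  assumes dec: "\<And>i j. s \<le> i \<Longrightarrow> i \<le> j \<Longrightarrow> j < e \<Longrightarrow> a j \<le> a i"
    and sl: "s \<le> l" and le: "l \<le> e"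
  shows "real (l - s) * (\<Sum>i\<in>{s..<e}. a i) \<le> real (e - s) * (\<Sum>i\<in>{s..<l}. a i)"
proof (cases "l = e")
  case True then show ?thesis by simp
next
  case False
  then have le': "l < e" using le by simp
  define M where "M = a l"
  have S1: "real (l - s) * M \<le> (\<Sum>i\<in>{s..<l}. a i)"
  proof -
    have "(\<Sum>i\<in>{s..<l}. M) \<le> (\<Sum>i\<in>{s..<l}. a i)"
      using dec le' unfolding M_def by (intro sum_mono) auto
    then show ?thesis by simp
  qed
  have S2: "(\<Sum>i\<in>{l..<e}. a i) \<le> real (e - l) * M"
  proof -
    have "(\<Sum>i\<in>{l..<e}. a i) \<le> (\<Sum>i\<in>{l..<e}. M)"
      using dec sl unfolding M_def by (intro sum_mono) auto
    then show ?thesis by simp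
  qed
  have split: "(\<Sum>i\<in>{s..<e}. a i) = (\<Sum>i\<in>{s..<l}. a i) + (\<Sum>i\<in>{l..<e}. a i)"
    using sl le by (simp add: sum.atLeastLessThan_concat)
  have "real (l - s) * (\<Sum>i\<in>{l..<e}. a i) \<le> real (l - s) * (real (e - l) * M)"
    using S2 by (intro mult_left_mono) auto
  also have "\<dots> = real (e - l) * (real (l - s) * M)" by simp
  also have "\<dots> \<le> real (e - l) * (\<Sum>i\<in>{s..<l}. a i)" using S1 by (intro mult_left_mono) auto
  finally have "real (l - s) * (\<Sum>i\<in>{l..<e}. a i) \<le> real (e - l) * (\<Sum>i\<in>{s..<l}. a i)" .
  moreover have "real (e - s) = real (l - s) + real (e - l)" using sl le by simp
  ultimately show ?thesis unfolding split by (simp add: algebra_simps)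
qed

lemma expand_zeros:
  assumes exp: "\<And>xs. prob_vec xs \<Longrightarrow> F (xs @ [0]) = F xs" and pv: "prob_vec xs"
  shows "F (xs @ replicate m 0) = F xs"
proof (induction m)
  case 0 then show ?case by simp
next
  case (Suc m)
  have pv': "prob_vec (xs @ replicate m 0)" using pv by (auto simp: prob_vec_def sum_list_replicate)
  have "xs @ replicate (Suc m) 0 = (xs @ replicate m 0) @ [0]" by (simp add: replicate_append_same)
  then show ?case using exp[OF pv'] Suc by simp
qed

lemma jstar_facts:
  fixes p :: "nat \<Rightarrow> real"
  assumes k0: "0 < k" and kn: "k < n"
    and dec: "\<And>i j. 1 \<le> i \<Longrightarrow> i \<le> j \<Longrightarrow> j \<le> n \<Longrightarrow> p j \<le> p i"
    and pn: "0 < p n"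
  defines "J \<equiv> jstar n p k"
  defines "c \<equiv> (\<Sum>i=J..n. p i) / real (k - J + 1)"
  shows "1 \<le> J" "J \<le> k" "0 \<le> c" "2 \<le> J \<Longrightarrow> c \<le> p (J - 1)"
    "real (k - J + 1) * c = (\<Sum>i=J..n. p i)"
proof -
  have ppos: "0 < p i" if "1 \<le> i" "i \<le> n" for i
    using dec[OF that(1) that(2) order_refl] pn by linarith
  let ?P = "\<lambda>j. 1 \<le> j \<and> j \<le> k \<and> p j \<le> (\<Sum>i=j..n. p i) / real (k - j + 1)"
  have Pk: "?P k"
  proof -
    have "0 \<le> p x" if "x \<in> {k..n} - {k}" for x
    proof -
      have "1 \<le> x" "x \<le> n" using that k0 by auto
      then show ?thesis using ppos[of x] by simp
    qed
    moreover have "k \<in> {k..n}" using kn by simp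
    ultimately have "p k \<le> (\<Sum>i=k..n. p i)" by (intro member_le_sum) auto
    then show ?thesis using k0 by simp
  qed
  have PJ: "?P J" unfolding J_def jstar_def by (rule LeastI[of ?P k]) (rule Pk)
  then show J1: "1 \<le> J" and Jk: "J \<le> k" by auto
  have "0 \<le> p x" if "x \<in> {J..n}" for x
  proof -
    have "1 \<le> x" "x \<le> n" using that J1 by auto
    then show ?thesis using ppos[of x] by simp
  qed
  then show "0 \<le> c" unfolding c_def by (intro divide_nonneg_nonneg sum_nonneg) auto
  show "real (k - J + 1) * c = (\<Sum>i=J..n. p i)" unfolding c_def by simp
  assume J2: "2 \<le> J"
  have Jeq: "J = (LEAST j. ?P j)" unfolding J_def jstar_def by simp
  have "J - 1 < (LEAST j. ?P j)" using J2 Jeq by simp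
  from not_less_Least[OF this] have "\<not> ?P (J - 1)" .
  moreover have "1 \<le> J - 1" "J - 1 \<le> k" using J2 Jk by auto
  ultimately have lt: "(\<Sum>i=J-1..n. p i) / real (k - (J - 1) + 1) < p (J - 1)" by linarith
  have m0: "0 < real (k - J + 1)" by simp
  have eqm: "real (k - (J - 1) + 1) = real (k - J + 1) + 1" using J2 Jk by simp
  have sp: "(\<Sum>i=J-1..n. p i) = p (J - 1) + (\<Sum>i=J..n. p i)"
  proof -
    have "{J-1..n} = insert (J-1) {J..n}" using J2 Jk kn by auto
    moreover have "J - 1 \<notin> {J..n}" using J2 by simp
    ultimately show ?thesis by simp
  qed
  have "(\<Sum>i=J..n. p i) < real (k - J + 1) * p (J - 1)"
    using lt unfolding sp eqm by (simp add: field_simps)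
  then show "c \<le> p (J - 1)" unfolding c_def using m0 by (simp add: field_simps)
qed

lemma pi_vec_nth:
  assumes "i < k"
  shows "pi_vec n p k ! i = (if Suc i \<le> jstar n p k - 1 then p (Suc i)
      else (\<Sum>i=jstar n p k..n. p i) / real (k - jstar n p k + 1))"
  using assms by (simp add: pi_vec_def del: upt_Suc)

lemma length_pi_vec: "length (pi_vec n p k) = k" by (simp add: pi_vec_def)

lemma shift_sum: "(\<Sum>x=Suc a..b. f x) = (\<Sum>i\<in>{a..<b}. f (Suc i))"
proof -
  have "(\<Sum>x=Suc a..b. f x) = (\<Sum>x\<in>{Suc a..<Suc b}. f x)" by (simp add: atLeastLessThanSuc_atLeastAtMost)
  also have "\<dots> = (\<Sum>i\<in>{a..<b}. f (Suc i))" by (rule sum.shift_bounds_Suc_ivl)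
  finally show ?thesis .
qed

lemma sort_vec:
  fixes q :: "real list" and F :: "real list \<Rightarrow> real"
  assumes pvq: "prob_vec q"
    and sym: "\<forall>xs ys. prob_vec xs \<longrightarrow> mset xs = mset ys \<longrightarrow> F ys = F xs"
  shows "prob_vec (sort_key uminus q)" "F (sort_key uminus q) = F q"
proof -
  have m: "mset q = mset (sort_key uminus q)" by simp
  then show "F (sort_key uminus q) = F q" using sym pvq by blast
  show "prob_vec (sort_key uminus q)" using pvq m unfolding prob_vec_def
    by (metis mset_eq_setD sum_mset_sum_list)
qed

lemma sort_zero:
  fixes q :: "real list"
  assumes nn: "\<forall>x\<in>set q. 0 \<le> x"
    and cnt: "length (filter (\<lambda>x. 0 < x) q) \<le> k"
    and j: "k \<le> j" "j < length q"
  shows "sort_key uminus q ! j = 0"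
proof (rule ccontr)
  define d where "d = sort_key uminus q"
  assume "sort_key uminus q ! j \<noteq> 0"
  moreover have "0 \<le> d ! j" using nn j by (simp add: d_def) (metis length_sort mset_sort nth_mem set_mset_mset)
  ultimately have pos: "0 < d ! j" by (simp add: d_def)
  have "{0..j} \<subseteq> {i. i < length d \<and> 0 < d ! i}"
  proof
    fix i assume "i \<in> {0..j}"
    then have "i \<le> j" by simp
    then have "d ! j \<le> d ! i" using sort_desc[of i j q] j by (simp add: d_def)
    then show "i \<in> {i. i < length d \<and> 0 < d ! i}" using pos \<open>i \<le> j\<close> j by (simp add: d_def)
  qed
  then have "card {0..j} \<le> card {i. i < length d \<and> 0 < d ! i}" by (intro card_mono) auto
  also have "\<dots> = length (filter (\<lambda>x. 0 < x) d)" by (simp add: length_filter_conv_card)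
  also have "\<dots> = length (filter (\<lambda>x. 0 < x) q)"
  proof -
    have "mset (filter (\<lambda>x. 0 < x) d) = mset (filter (\<lambda>x. 0 < x) q)" by (simp add: d_def)
    then show ?thesis by (metis size_mset)
  qed
  finally show False using cnt j by simp
qed

lemma core:
  fixes n k :: nat and p :: "nat \<Rightarrow> real" and F :: "real list \<Rightarrow> real" and W :: "nat \<Rightarrow> 'y \<Rightarrow> real"
  assumes k0: "0 < k" and kn: "k < n"
    and psum: "(\<Sum>x=1..n. p x) = 1"
    and dec: "\<And>i j. 1 \<le> i \<Longrightarrow> i \<le> j \<Longrightarrow> j \<le> n \<Longrightarrow> p j \<le> p i"
    and pn: "0 < p n"
    and ch: "channel n W" and fe: "feasible n k W"
    and conc: "concave_ent F"
    and bnd: "\<And>xs. prob_vec xs \<Longrightarrow> \<bar>F xs\<bar> \<le> B"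
    and sym: "\<forall>xs ys. prob_vec xs \<longrightarrow> mset xs = mset ys \<longrightarrow> F ys = F xs"
    and exp: "\<And>xs. prob_vec xs \<Longrightarrow> F (xs @ [0]) = F xs"
  shows "(\<lambda>y. out_prob n p W y * F (post n p W y)) summable_on {y. 0 < out_prob n p W y} \<and>
    infsum (\<lambda>y. out_prob n p W y * F (post n p W y)) {y. 0 < out_prob n p W y} \<le> F (pi_vec n p k)"
proof -
  define out where "out = out_prob n p W"
  define Y where "Y = {y. 0 < out y}"
  have ppos: "0 < p i" if "1 \<le> i" "i \<le> n" for i
    using dec[OF that(1) that(2) order_refl] pn by linarith
  have Wnn: "0 \<le> W x y" if "x \<in> {1..n}" for x y using ch that by (simp add: channel_def)
  have Whs: "((\<lambda>y. W x y) has_sum 1) UNIV" if "x \<in> {1..n}" for x using ch that by (simp add: channel_def)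
  have outdef: "out y = (\<Sum>x=1..n. p x * W x y)" for y by (simp add: out_def out_prob_def)
  have outnn: "0 \<le> out y" for y
    unfolding outdef using Wnn ppos by (intro sum_nonneg) (simp add: less_imp_le)
  have Wzero: "W x y = 0" if x: "x \<in> {1..n}" and y: "y \<notin> Y" for x y
  proof -
    have "out y = 0" using y outnn[of y] by (simp add: Y_def)
    then have "\<forall>x\<in>{1..n}. p x * W x y = 0"
      using sum_nonneg_eq_0_iff[of "{1..n}" "\<lambda>x. p x * W x y"] Wnn ppos
      unfolding outdef by (simp add: less_imp_le)
    then have "p x * W x y = 0" using x by blast
    then show ?thesis using ppos[of x] x by simp
  qed
  have WhsY: "((\<lambda>y. W x y) has_sum 1) Y" if "x \<in> {1..n}" for x
  proof -
    have "((\<lambda>y. W x y) has_sum 1) UNIV \<longleftrightarrow> ((\<lambda>y. W x y) has_sum 1) Y"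
      by (rule has_sum_cong_neutral) (use Wzero that in auto)
    then show ?thesis using Whs[OF that] by simp
  qed
  have ouths: "(out has_sum 1) Y"
  proof -
    have "((\<lambda>y. \<Sum>x=1..n. p x * W x y) has_sum (\<Sum>x=1..n. p x * 1)) Y"
      by (rule has_sum_sum_fin) (use has_sum_cmult_right[OF WhsY] in auto)
    then show ?thesis using psum by (simp add: outdef[abs_def])
  qed
  define q where "q = post n p W"
  define d where "d = (\<lambda>y. sort_key uminus (q y))"
  define v where "v = (\<lambda>y i. d y ! i)"
  have lenq: "length (q y) = n" for y by (simp add: q_def post_def)
  have lend: "length (d y) = n" for y by (simp add: d_def lenq)
  have qnth: "q y ! i = p (Suc i) * W (Suc i) y / out y" if "i < n" for y i
    using that by (simp add: q_def post_def out_def del: upt_Suc)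
  have outsh: "out y = (\<Sum>i<n. p (Suc i) * W (Suc i) y)" for y
    unfolding outdef using shift_sum[where a=0 and b=n and f="\<lambda>x. p x * W x y"] by (simp add: atLeast0LessThan)
  have qmap: "q y = map (\<lambda>i. q y ! i) [0..<n]" for y using map_nth[of "q y"] lenq by simp
  have pvq: "prob_vec (q y)" if "y \<in> Y" for y
  proof -
    have op: "0 < out y" using that by (simp add: Y_def)
    have "\<forall>i<n. 0 \<le> q y ! i" using op Wnn ppos by (simp add: qnth less_imp_le)
    moreover have "(\<Sum>i<n. q y ! i) = 1"
      using op by (simp add: qnth sum_divide_distrib[symmetric] outsh[symmetric])
    ultimately show ?thesis by (subst qmap) (simp add: prob_vec_map)
  qed
  have mapd: "map (v y) [0..<n] = d y" for y using map_nth[of "d y"] lend by (simp add: v_def)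
  have pvd: "prob_vec (map (v y) [0..<n])" if "y \<in> Y" for y
    using sort_vec(1)[OF pvq[OF that] sym] mapd by (simp add: d_def)
  have Fd: "F (map (v y) [0..<n]) = F (q y)" if "y \<in> Y" for y
    using sort_vec(2)[OF pvq[OF that] sym] mapd by (simp add: d_def)
  have JI: "(\<forall>j<n. (\<lambda>y. out y * v y j) summable_on Y) \<and> (\<lambda>y. out y * F (map (v y) [0..<n])) summable_on Y \<and>
    infsum (\<lambda>y. out y * F (map (v y) [0..<n])) Y
      \<le> F (map (\<lambda>j. infsum (\<lambda>y. out y * v y j) Y) [0..<n])"
    by (rule jensen_inf[OF conc bnd _ ouths pvd]) (auto simp: outnn)
  define r where "r = (\<lambda>j. infsum (\<lambda>y. out y * v y j) Y)"
  have comps: "\<And>j. j < n \<Longrightarrow> (\<lambda>y. out y * v y j) summable_on Y" using JI by blast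
  have eqinf: "infsum (\<lambda>y. out y * F (q y)) Y = infsum (\<lambda>y. out y * F (map (v y) [0..<n])) Y"
    by (rule infsum_cong) (simp add: Fd)
  have eqsum: "(\<lambda>y. out y * F (q y)) summable_on Y"
    using JI summable_on_cong[of Y "\<lambda>y. out y * F (q y)" "\<lambda>y. out y * F (map (v y) [0..<n])"] Fd by auto
  have step1: "infsum (\<lambda>y. out y * F (q y)) Y \<le> F (map r [0..<n])"
    using JI eqinf by (simp add: r_def)
  have vnn: "0 \<le> v y j" if "y \<in> Y" "j < n" for y j
    using pvd[OF that(1)] that(2) by (simp add: prob_vec_map)
  have rnn: "\<forall>j<n. 0 \<le> r j" unfolding r_def using vnn outnn by (auto intro!: infsum_nonneg)
  have rsumfin: "(\<Sum>j\<in>{..<l}. r j) = infsum (\<lambda>y. \<Sum>j<l. out y * v y j) Y" if "l \<le> n" for l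
    using infsum_sum_fin[of "{..<l}" "\<lambda>j y. out y * v y j" Y] comps that by (simp add: r_def)
  have rtot: "(\<Sum>j<n. r j) = 1"
  proof -
    have "(\<Sum>j<n. r j) = infsum (\<lambda>y. \<Sum>j<n. out y * v y j) Y" by (rule rsumfin) simp
    also have "\<dots> = infsum out Y"
    proof (rule infsum_cong)
      fix y assume "y \<in> Y"
      then have "(\<Sum>j<n. v y j) = 1" using pvd by (simp add: prob_vec_map)
      then show "(\<Sum>j<n. out y * v y j) = out y" by (simp add: sum_distrib_left[symmetric])
    qed
    finally show ?thesis using ouths by (simp add: has_sum_iff)
  qed
  have rdec: "r j \<le> r i" if "i \<le> j" "j < n" for i j
    unfolding r_def
  proof (rule infsum_mono[OF comps comps])
    show "j < n" "i < n" using that by auto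
    fix y assume "y \<in> Y"
    have "v y j \<le> v y i" using sort_desc[of i j "q y"] that lenq by (simp add: v_def d_def)
    then show "out y * v y j \<le> out y * v y i" using outnn by (simp add: mult_left_mono)
  qed
  have vzero: "v y j = 0" if "y \<in> Y" "k \<le> j" "j < n" for y j
  proof -
    have op: "0 < out y" using that by (simp add: Y_def)
    have nn: "\<forall>x\<in>set (q y). 0 \<le> x" using pvq[OF that(1)] by (simp add: prob_vec_def)
    have "length (filter (\<lambda>x. 0 < x) (q y)) = length (filter (\<lambda>i. 0 < q y ! i) [0..<n])"
      by (subst qmap) (simp add: filter_map comp_def)
    also have "\<dots> = card ({i. 0 < q y ! i} \<inter> {0..<n})" by (simp add: distinct_length_filter)
    also have "\<dots> \<le> card {x\<in>{1..n}. 0 < W x y}"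
    proof (rule card_inj_on_le[of Suc])
      show "inj_on Suc ({i. 0 < q y ! i} \<inter> {0..<n})" by simp
      show "finite {x\<in>{1..n}. 0 < W x y}" by simp
      show "Suc ` ({i. 0 < q y ! i} \<inter> {0..<n}) \<subseteq> {x\<in>{1..n}. 0 < W x y}"
      proof
        fix x assume "x \<in> Suc ` ({i. 0 < q y ! i} \<inter> {0..<n})"
        then obtain i where i: "x = Suc i" "i < n" "0 < q y ! i" by auto
        then have "0 < p (Suc i) * W (Suc i) y / out y" using qnth by simp
        then have "0 < W (Suc i) y" using op ppos[of "Suc i"] i
          by (simp add: zero_less_divide_iff zero_less_mult_iff)
        then show "x \<in> {x\<in>{1..n}. 0 < W x y}" using i by simp
      qed
    qed
    also have "\<dots> \<le> k" using fe by (simp add: feasible_def)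
    finally have cnt: "length (filter (\<lambda>x. 0 < x) (q y)) \<le> k" .
    show ?thesis unfolding v_def d_def using sort_zero[OF nn cnt] that lenq by simp
  qed
  have rzero: "r j = 0" if "k \<le> j" "j < n" for j
    unfolding r_def using vzero that by (simp add: infsum_0)
  have rpre: "(\<Sum>i<l. p (Suc i)) \<le> (\<Sum>i<l. r i)" if "l \<le> n" for l
  proof -
    have hs: "((\<lambda>y. \<Sum>i<l. p (Suc i) * W (Suc i) y) has_sum (\<Sum>i<l. p (Suc i) * 1)) Y"
      by (rule has_sum_sum_fin) (use that has_sum_cmult_right[OF WhsY] in auto)
    have ss: "(\<lambda>y. \<Sum>j<l. out y * v y j) summable_on Y"
      using infsum_sum_fin[of "{..<l}" "\<lambda>j y. out y * v y j" Y] comps that by simp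
    have "(\<Sum>i<l. p (Suc i)) = infsum (\<lambda>y. \<Sum>i<l. p (Suc i) * W (Suc i) y) Y"
      using hs by (simp add: has_sum_iff)
    also have "\<dots> \<le> infsum (\<lambda>y. \<Sum>j<l. out y * v y j) Y"
    proof (rule infsum_mono[OF _ ss])
      show "(\<lambda>y. \<Sum>i<l. p (Suc i) * W (Suc i) y) summable_on Y" using hs by (simp add: has_sum_iff)
      fix y assume y: "y \<in> Y"
      have op: "0 < out y" using y by (simp add: Y_def)
      have "(\<Sum>i<l. p (Suc i) * W (Suc i) y) = out y * (\<Sum>i<l. q y ! i)"
        using op that by (simp add: qnth sum_distrib_left)
      also have "(\<Sum>i<l. q y ! i) = sum_list (take l (q y))"
        using prefix_map[OF that, of "\<lambda>i. q y ! i"] qmap[of y] by simp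
      also have "\<dots> \<le> sum_list (take l (d y))" unfolding d_def by (rule sort_prefix)
      also have "\<dots> = (\<Sum>j<l. v y j)" using prefix_map[OF that, of "v y"] mapd[of y] by simp
      finally show "(\<Sum>i<l. p (Suc i) * W (Suc i) y) \<le> (\<Sum>j<l. out y * v y j)"
        using outnn[of y] by (simp add: mult_left_mono sum_distrib_left)
    qed
    also have "\<dots> = (\<Sum>i<l. r i)" using rsumfin[OF that] by simp
    finally show ?thesis .
  qed
  define J where "J = jstar n p k"
  define c where "c = (\<Sum>i=J..n. p i) / real (k - J + 1)"
  have J1: "1 \<le> J" and Jk: "J \<le> k" and c0: "0 \<le> c" and cJ: "2 \<le> J \<Longrightarrow> c \<le> p (J - 1)"
    and mc0: "real (k - J + 1) * c = (\<Sum>i=J..n. p i)"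
    using jstar_facts[where n=n and k=k and p=p, OF k0 kn dec pn] unfolding J_def c_def by auto
  define PJ where "PJ = (\<Sum>i<J-1. p (Suc i))"
  have ptot: "(\<Sum>i<n. p (Suc i)) = 1"
    using psum shift_sum[where a=0 and b=n and f=p] by (simp add: atLeast0LessThan)
  have tailsum: "(\<Sum>i=J..n. p i) = 1 - PJ"
  proof -
    have "(\<Sum>i=J..n. p i) = (\<Sum>i\<in>{J-1..<n}. p (Suc i))"
      using shift_sum[where a="J-1" and b=n and f=p] J1 by simp
    moreover have "(\<Sum>i<n. p (Suc i)) = PJ + (\<Sum>i\<in>{J-1..<n}. p (Suc i))"
      unfolding PJ_def lessThan_atLeast0 using Jk kn by (intro sum.atLeastLessThan_concat[symmetric]) auto
    ultimately show ?thesis using ptot by simp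
  qed
  have kJ: "k - J + 1 = k - (J - 1)" using J1 Jk by simp
  have mc: "real (k - (J - 1)) * c = 1 - PJ" using mc0 tailsum unfolding kJ by simp
  define pf where "pf = (\<lambda>i. if i < J - 1 then p (Suc i) else if i < k then c else 0)"
  have Spf: "(\<Sum>i<l. pf i) = (\<Sum>i<min l (J-1). p (Suc i)) + real (min l k - min l (J-1)) * c" for l
  proof (induction l)
    case 0 then show ?case by simp
  next
    case (Suc l)
    have step: "(\<Sum>i<Suc l. pf i) = (\<Sum>i<l. pf i) + pf l" by (rule sum.lessThan_Suc)
    show ?case
    proof (cases "l < J - 1")
      case True
      have m: "min (Suc l) (J-1) = Suc l" "min l (J-1) = l" "min (Suc l) k = Suc l" "min l k = l"
        using True Jk by auto
      have pfl: "pf l = p (Suc l)" using True by (simp add: pf_def)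
      have "(\<Sum>i<Suc l. p (Suc i)) = (\<Sum>i<l. p (Suc i)) + p (Suc l)" by (rule sum.lessThan_Suc)
      then show ?thesis using step Suc.IH pfl unfolding m by simp
    next
      case False
      show ?thesis
      proof (cases "l < k")
        case True
        have m: "min (Suc l) (J-1) = J-1" "min l (J-1) = J-1" "min (Suc l) k = Suc l" "min l k = l"
          using False True by auto
        have pfl: "pf l = c" using True False by (simp add: pf_def)
        have r1: "real (Suc l - (J-1)) = real (l - (J-1)) + 1" using False by simp
        show ?thesis using step Suc.IH pfl unfolding m r1 by (simp add: distrib_right)
      next
        case False2: False
        have m: "min (Suc l) (J-1) = J-1" "min l (J-1) = J-1" "min (Suc l) k = k" "min l k = k"
          using False False2 Jk by auto
        have pfl: "pf l = 0" using False False2 by (simp add: pf_def)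
        show ?thesis using step Suc.IH pfl unfolding m by simp
      qed
    qed
  qed
  have S1: "(\<Sum>i<l. pf i) = (\<Sum>i<l. p (Suc i))" if "l \<le> J - 1" for l
    using Spf[of l] that Jk by (simp add: min_def)
  have S2: "(\<Sum>i<l. pf i) = PJ + real (l - (J - 1)) * c" if "J - 1 \<le> l" "l \<le> k" for l
    using Spf[of l] that by (simp add: min_def PJ_def)
  have S3: "(\<Sum>i<l. pf i) = 1" if "k \<le> l" for l
  proof -
    have mins: "min l (J-1) = J-1" "min l k = k" using that Jk by auto
    have "(\<Sum>i<l. pf i) = PJ + real (k - (J - 1)) * c" using Spf[of l] unfolding mins PJ_def by simp
    then show ?thesis using mc by linarith
  qed
  have rsplit: "(\<Sum>i<l. r i) = (\<Sum>i<a. r i) + (\<Sum>i\<in>{a..<l}. r i)" if "a \<le> l" for a l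
    unfolding lessThan_atLeast0 using that by (intro sum.atLeastLessThan_concat[symmetric]) auto
  have rS: "(\<Sum>i<l. r i) = 1" if "k \<le> l" "l \<le> n" for l
  proof -
    have "(\<Sum>i\<in>{l..<n}. r i) = 0" using rzero that by (intro sum.neutral) auto
    then show ?thesis using rsplit[of l n] that rtot by simp
  qed
  have dom: "\<forall>l\<le>n. (\<Sum>i<l. pf i) \<le> (\<Sum>i<l. r i)"
  proof (intro allI impI)
    fix l assume ln: "l \<le> n"
    consider "l \<le> J - 1" | "J - 1 \<le> l" "l \<le> k" | "k \<le> l" by linarith
    then show "(\<Sum>i<l. pf i) \<le> (\<Sum>i<l. r i)"
    proof cases
      case 1 then show ?thesis using S1 rpre ln by simp
    next
      case 2
      define A where "A = (\<Sum>i<J-1. r i)"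
      define u where "u = real (l - (J - 1))"
      define m where "m = real (k - (J - 1))"
      have hA: "PJ \<le> A" unfolding PJ_def A_def using rpre Jk kn by simp
      have avg: "u * (\<Sum>i\<in>{J-1..<k}. r i) \<le> m * (\<Sum>i\<in>{J-1..<l}. r i)"
        unfolding u_def m_def using 2 kn by (intro avg_dec) (auto intro: rdec)
      have jk': "J - 1 \<le> k" using Jk by simp
      have sk: "(\<Sum>i\<in>{J-1..<k}. r i) = 1 - A" using rsplit[OF jk'] rS[of k] kn unfolding A_def by simp
      have sl: "(\<Sum>i\<in>{J-1..<l}. r i) = (\<Sum>i<l. r i) - A" using rsplit[of "J-1" l] 2 A_def by simp
      have um: "u \<le> m" using 2 unfolding u_def m_def by simp
      have mpos: "0 < m" using Jk J1 unfolding m_def by simp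
      have p1: "0 \<le> (m - u) * (A - PJ)" using um hA by simp
      have e1: "m * (PJ + u * c) = m * PJ + u * (1 - PJ)"
      proof -
        have "m * (PJ + u * c) = m * PJ + u * (m * c)" by (simp add: algebra_simps)
        then show ?thesis using mc unfolding m_def by simp
      qed
      have e2: "(m - u) * (A - PJ) = m * A - u * A - m * PJ + u * PJ" by (simp add: algebra_simps)
      have e3: "u * (1 - A) = u - u * A" by (simp add: algebra_simps)
      have e4: "m * ((\<Sum>i<l. r i) - A) = m * (\<Sum>i<l. r i) - m * A" by (simp add: algebra_simps)
      have e5: "u * (1 - PJ) = u - u * PJ" by (simp add: algebra_simps)
      have "m * (PJ + u * c) \<le> m * (\<Sum>i<l. r i)"
      proof -
        have avg': "u * (1 - A) \<le> m * ((\<Sum>i<l. r i) - A)" using avg unfolding sk sl .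
        show ?thesis using avg' p1 e1 e2 e3 e4 e5 by linarith
      qed
      then have "PJ + u * c \<le> (\<Sum>i<l. r i)" using mpos by simp
      then show ?thesis using S2[OF 2] u_def by simp
    next
      case 3 then show ?thesis using S3 rS ln by simp
    qed
  qed
  have pfnn: "\<And>i. i < n \<Longrightarrow> 0 \<le> pf i" using ppos c0 by (simp add: pf_def less_imp_le)
  have pfdec: "\<And>i j. i \<le> j \<Longrightarrow> j < n \<Longrightarrow> pf j \<le> pf i"
  proof -
    fix i j assume ij: "i \<le> j" "j < n"
    show "pf j \<le> pf i"
    proof (cases "j < J - 1")
      case True then show ?thesis using ij dec[of "Suc i" "Suc j"] by (simp add: pf_def)
    next
      case False
      show ?thesis
      proof (cases "j < k")
        case True
        show ?thesis
        proof (cases "i < J - 1")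
          case True2: True
          have "p (J - 1) \<le> p (Suc i)" using dec[of "Suc i" "J - 1"] True2 Jk kn by simp
          moreover have "c \<le> p (J - 1)" using cJ True2 by simp
          ultimately show ?thesis using True True2 False by (simp add: pf_def)
        next
          case False2: False
          then show ?thesis using True ij by (simp add: pf_def)
        qed
      next
        case False2: False
        then have "pf j = 0" using Jk by (simp add: pf_def)
        then show ?thesis using pfnn[of i] ij by simp
      qed
    qed
  qed
  have pftot: "(\<Sum>i<n. pf i) = 1" using S3 kn by simp
  have schur: "F (map r [0..<n]) \<le> F (map pf [0..<n])"
    using schur_aux[OF conc sym pfdec pfnn pftot refl] rnn rtot dom by blast
  have mpf: "map pf [0..<n] = pi_vec n p k @ replicate (n - k) 0"
  proof (rule nth_equalityI)
    show "length (map pf [0..<n]) = length (pi_vec n p k @ replicate (n - k) 0)"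
      using kn by (simp add: length_pi_vec)
    fix i assume "i < length (map pf [0..<n])"
    then have i: "i < n" by simp
    show "map pf [0..<n] ! i = (pi_vec n p k @ replicate (n - k) 0) ! i"
    proof (cases "i < k")
      case True
      then show ?thesis using i by (simp add: nth_append length_pi_vec pi_vec_nth pf_def J_def c_def)
    next
      case False
      then show ?thesis using i Jk by (simp add: nth_append length_pi_vec pf_def)
    qed
  qed
  have pvpf: "prob_vec (map pf [0..<n])" using pfnn pftot by (simp add: prob_vec_map)
  have pvpi: "prob_vec (pi_vec n p k)"
    using pvpf unfolding mpf by (simp add: prob_vec_def sum_list_replicate)
  have "F (map pf [0..<n]) = F (pi_vec n p k)" unfolding mpf by (rule expand_zeros[where F=F, OF exp pvpi])
  then have "infsum (\<lambda>y. out y * F (q y)) Y \<le> F (pi_vec n p k)" using step1 schur by simp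
  then show ?thesis using eqsum by (simp add: out_def Y_def q_def)
qed

theorem lemma1:
  fixes n k :: nat and p :: "nat \<Rightarrow> real" and \<eta> :: "real \<Rightarrow> real"
    and F :: "real list \<Rightarrow> real" and W :: "nat \<Rightarrow> 'y \<Rightarrow> real"
  assumes "0 < k" and "k < n"
    and "(\<Sum>x=1..n. p x) = 1"
    and "\<And>i j. 1 \<le> i \<Longrightarrow> i \<le> j \<Longrightarrow> j \<le> n \<Longrightarrow> p j \<le> p i"
    and "0 < p n"
    and "gen_entropy \<eta> F"
    and "channel n W" and "feasible n k W"
  shows "cond_ent \<eta> F n p W \<le> \<eta> (F (pi_vec n p k))"
proof -
  obtain B where bnd: "\<And>xs. prob_vec xs \<Longrightarrow> \<bar>F xs\<bar> \<le> B"
    using assms(6) unfolding gen_entropy_def by blast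
  have sym: "\<forall>xs ys. prob_vec xs \<longrightarrow> mset xs = mset ys \<longrightarrow> F ys = F xs"
    using assms(6) unfolding gen_entropy_def by blast
  have exp: "\<And>xs. prob_vec xs \<Longrightarrow> F (xs @ [0]) = F xs"
    using assms(6) unfolding gen_entropy_def by blast
  have cases: "(mono \<eta> \<and> concave_ent F) \<or> (antimono \<eta> \<and> convex_ent F)"
    using assms(6) unfolding gen_entropy_def by blast
  define S where "S = infsum (\<lambda>y. out_prob n p W y * F (post n p W y)) {y. 0 < out_prob n p W y}"
  have ce: "cond_ent \<eta> F n p W = \<eta> S" by (simp add: cond_ent_def S_def)
  from cases show ?thesis
  proof
    assume h: "mono \<eta> \<and> concave_ent F"
    have "S \<le> F (pi_vec n p k)"
      using conjunct2[OF core[OF assms(1-5,7,8) conjunct2[OF h] bnd sym exp]] unfolding S_def .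
    then show ?thesis using h ce by (simp add: monoD)
  next
    assume h: "antimono \<eta> \<and> convex_ent F"
    define G where "G = (\<lambda>xs. - F xs)"
    have concG: "concave_ent G"
    proof (unfold concave_ent_def, intro allI impI)
      fix xs ys and t :: real
      assume a: "prob_vec xs" "prob_vec ys" "length xs = length ys" "0 \<le> t" "t \<le> 1"
      have "F (map2 (\<lambda>a b. t * a + (1 - t) * b) xs ys) \<le> t * F xs + (1 - t) * F ys"
        using conjunct2[OF h] a unfolding convex_ent_def by blast
      then show "t * G xs + (1 - t) * G ys \<le> G (map2 (\<lambda>a b. t * a + (1 - t) * b) xs ys)"
        by (simp add: G_def)
    qed
    have bndG: "\<And>xs. prob_vec xs \<Longrightarrow> \<bar>G xs\<bar> \<le> B" using bnd by (simp add: G_def)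
    have symG: "\<forall>xs ys. prob_vec xs \<longrightarrow> mset xs = mset ys \<longrightarrow> G ys = G xs"
    proof (intro allI impI)
      fix xs ys assume "prob_vec xs" "mset xs = mset ys"
      then have "F ys = F xs" using sym by blast
      then show "G ys = G xs" by (simp add: G_def)
    qed
    have expG: "\<And>xs. prob_vec xs \<Longrightarrow> G (xs @ [0]) = G xs" using exp by (simp add: G_def)
    have "infsum (\<lambda>y. out_prob n p W y * G (post n p W y)) {y. 0 < out_prob n p W y} \<le> G (pi_vec n p k)"
      using conjunct2[OF core[OF assms(1-5,7,8) concG bndG symG expG]] .
    moreover have "infsum (\<lambda>y. out_prob n p W y * G (post n p W y)) {y. 0 < out_prob n p W y} = - S"
    proof -
      have "(\<lambda>y. out_prob n p W y * G (post n p W y)) = (\<lambda>y. - (out_prob n p W y * F (post n p W y)))"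
        by (simp add: G_def fun_eq_iff)
      then show ?thesis unfolding S_def by (simp only: infsum_uminus)
    qed
    ultimately have "F (pi_vec n p k) \<le> S" by (simp add: G_def)
    then show ?thesis using h ce by (simp add: antimonoD)
  qed
qed

end
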